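(* Let $x$ and $y$ be two distinct vertices of a graph $G$. Then there exists an $x$–$y$ grain line in $G$ if and only if $G$ contains infinitely many pairwise edge-disjoint $x$–$y$ paths.
   Context: Graphs are simple and may be infinite; $\mathbb{N}=\{0,1,2,\dots\}$. An $x$–$y$ path $P$ induces a linear order $\le_P$ on $V(P)$ (the order of traversal from $x$ to $y$). For distinct vertices $x,y$ of $G$, an $x$–$y$ grain line in $G$ is a pair $(L,\mathcal P)$ where $L\subseteq V(G)$ is a countable set with a linear order $\le_L$ having least element $x$ and greatest element $y$, and $\mathcal P=(P_n)_{n\in\mathbb{N}}$ is a sequence of pairwise edge-disjoint $x$–$y$ paths in $G$, such that: (GL1) $L$ is exactly the set of vertices $v$ for which $\{n\in\mathbb{N}: v\in V(P_n)\}$ is a non-empty final segment $\{n: n\ge m\}$ of $\mathbb{N}$; (GL2) if a vertex of $P_n$ is not in $L$, then it is not a vertex of any $P_m$ with $m\neq n$; (GL3) for every $n\in\mathbb{N}$, the orders $\le_{P_n}$ and $\le_L$ induce the same linear order on $L_{<n}:=L\cap\bigcup_{k<n}V(P_k)$. *)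

theory Defs
  imports Main "HOL-Library.Countable_Set"
begin

definition simple_graph :: "'a set \<Rightarrow> ('a \<Rightarrow> 'a \<Rightarrow> bool) \<Rightarrow> bool" where
  "simple_graph V E \<longleftrightarrow>
     (\<forall>u v. E u v \<longrightarrow> u \<in> V \<and> v \<in> V) \<and>
     (\<forall>u v. E u v \<longrightarrow> E v u) \<and> (\<forall>v. \<not> E v v)"

definition is_path :: "'a set \<Rightarrow> ('a \<Rightarrow> 'a \<Rightarrow> bool) \<Rightarrow> 'a \<Rightarrow> 'a \<Rightarrow> 'a list \<Rightarrow> bool" where
  "is_path V E x y p \<longleftrightarrow>
     p \<noteq> [] \<and> hd p = x \<and> last p = y \<and> distinct p \<and> set p \<subseteq> V \<and>
     (\<forall>i. Suc i < length p \<longrightarrow> E (p ! i) (p ! Suc i))"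

definition path_edges :: "'a list \<Rightarrow> 'a set set" where
  "path_edges p = {{p ! i, p ! Suc i} | i. Suc i < length p}"

definition edge_disjoint :: "'a list \<Rightarrow> 'a list \<Rightarrow> bool" where
  "edge_disjoint p q \<longleftrightarrow> path_edges p \<inter> path_edges q = {}"

definition path_le :: "'a list \<Rightarrow> 'a \<Rightarrow> 'a \<Rightarrow> bool" where
  "path_le p u w \<longleftrightarrow> (\<exists>i j. i \<le> j \<and> j < length p \<and> p ! i = u \<and> p ! j = w)"

definition grain_line ::
  "'a set \<Rightarrow> ('a \<Rightarrow> 'a \<Rightarrow> bool) \<Rightarrow> 'a \<Rightarrow> 'a \<Rightarrow> 'a set \<Rightarrow> ('a \<times> 'a) set \<Rightarrow> (nat \<Rightarrow> 'a list) \<Rightarrow> bool" where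
  "grain_line V E x y L R P \<longleftrightarrow>
     L \<subseteq> V \<and> countable L \<and> linear_order_on L R \<and>
     x \<in> L \<and> (\<forall>v\<in>L. (x, v) \<in> R) \<and> y \<in> L \<and> (\<forall>v\<in>L. (v, y) \<in> R) \<and>
     (\<forall>n. is_path V E x y (P n)) \<and>
     (\<forall>n m. n \<noteq> m \<longrightarrow> edge_disjoint (P n) (P m)) \<and>
     \<comment> \<open>GL1\<close>
     L = {v. \<exists>m. {n. v \<in> set (P n)} = {m..}} \<and>
     \<comment> \<open>GL2\<close>
     (\<forall>n v. v \<in> set (P n) \<and> v \<notin> L \<longrightarrow> (\<forall>m. m \<noteq> n \<longrightarrow> v \<notin> set (P m))) \<and>
     \<comment> \<open>GL3\<close>
     (\<forall>n. \<forall>u \<in> L \<inter> (\<Union>k<n. set (P k)). \<forall>w \<in> L \<inter> (\<Union>k<n. set (P k)).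
         path_le (P n) u w \<longleftrightarrow> (u, w) \<in> R)"

end

theory Submission
  imports Defs
begin

lemma pl_refl: assumes "v \<in> set p" shows "path_le p v v"
proof -
  obtain i where i: "i < length p" "p ! i = v" using assms by (auto simp: in_set_conv_nth)
  show ?thesis unfolding path_le_def using i by (intro exI[of _ i] exI[of _ i]) simp
qed

lemma pl_antisym:
  assumes d: "distinct p" and a: "path_le p u w" and b: "path_le p w u" shows "u = w"
proof -
  from a obtain i j where ij: "i \<le> j" "j < length p" "p ! i = u" "p ! j = w"
    unfolding path_le_def by blast
  from b obtain i' j' where ij': "i' \<le> j'" "j' < length p" "p ! i' = w" "p ! j' = u"
    unfolding path_le_def by blast
  have "i = j'" using nth_eq_iff_index_eq[OF d, of i j'] ij ij' by simp
  moreover have "j = i'" using nth_eq_iff_index_eq[OF d, of j i'] ij ij' by simp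
  ultimately have "i = j" using ij ij' by simp
  thus ?thesis using ij by simp
qed

lemma pl_trans:
  assumes d: "distinct p" and a: "path_le p u v" and b: "path_le p v w" shows "path_le p u w"
proof -
  from a obtain i j where ij: "i \<le> j" "j < length p" "p ! i = u" "p ! j = v"
    unfolding path_le_def by blast
  from b obtain i' j' where ij': "i' \<le> j'" "j' < length p" "p ! i' = v" "p ! j' = w"
    unfolding path_le_def by blast
  have "j = i'" using nth_eq_iff_index_eq[OF d, of j i'] ij ij' by simp
  thus ?thesis unfolding path_le_def using ij ij' by (intro exI[of _ i] exI[of _ j']) simp
qed

lemma pl_total:
  assumes "u \<in> set p" "w \<in> set p" shows "path_le p u w \<or> path_le p w u"
proof -
  obtain i where i: "i < length p" "p ! i = u" using assms(1) by (auto simp: in_set_conv_nth)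
  obtain j where j: "j < length p" "p ! j = w" using assms(2) by (auto simp: in_set_conv_nth)
  show ?thesis
  proof (cases "i \<le> j")
    case True thus ?thesis unfolding path_le_def using i j by blast
  next
    case False thus ?thesis unfolding path_le_def using i j by (intro disjI2 exI[of _ j] exI[of _ i]) simp
  qed
qed

lemma pl_hd: assumes "p \<noteq> []" "v \<in> set p" shows "path_le p (hd p) v"
proof -
  obtain i where i: "i < length p" "p ! i = v" using assms by (auto simp: in_set_conv_nth)
  show ?thesis unfolding path_le_def using i assms(1)
    by (intro exI[of _ 0] exI[of _ i]) (simp add: hd_conv_nth)
qed

lemma pl_last: assumes "p \<noteq> []" "v \<in> set p" shows "path_le p v (last p)"
proof -
  obtain i where i: "i < length p" "p ! i = v" using assms by (auto simp: in_set_conv_nth)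
  show ?thesis unfolding path_le_def using i assms(1)
    by (intro exI[of _ i] exI[of _ "length p - 1"]) (simp add: last_conv_nth)
qed

definition cls :: "'a list \<Rightarrow> 'a list \<Rightarrow> 'a set \<times> ('a \<times> 'a) set" where
  "cls p q = (set q \<inter> set p, {(u,w). u \<in> set p \<and> w \<in> set p \<and> path_le q u w})"

definition step :: "'a list set \<Rightarrow> 'a list set" where
  "step T = (let p = (SOME p. p \<in> T); T' = T - {p} in
     {q \<in> T'. cls p q = cls p (SOME q0. q0 \<in> T' \<and> infinite {q\<in>T'. cls p q = cls p q0})})"

lemma step_props:
  assumes "infinite T"
  shows "infinite (step T) \<and> step T \<subseteq> T - {SOME p. p \<in> T} \<and>
         (\<forall>q\<in>step T. \<forall>q'\<in>step T. cls (SOME p. p \<in> T) q = cls (SOME p. p \<in> T) q')"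
proof -
  define p where "p = (SOME p. p \<in> T)"
  define T' where "T' = T - {p}"
  have inf': "infinite T'" using assms by (simp add: T'_def)
  have fin: "finite (cls p ` T')"
  proof (rule finite_subset)
    show "cls p ` T' \<subseteq> Pow (set p) \<times> Pow (set p \<times> set p)"
      by (auto simp: cls_def)
  qed auto
  obtain a0 where "a0 \<in> T'" "infinite {a\<in>T'. cls p a = cls p a0}"
    using pigeonhole_infinite[OF inf' fin] by blast
  hence ex: "\<exists>q0. q0 \<in> T' \<and> infinite {q\<in>T'. cls p q = cls p q0}" by blast
  define q0 where "q0 = (SOME q0. q0 \<in> T' \<and> infinite {q\<in>T'. cls p q = cls p q0})"
  have q0: "q0 \<in> T' \<and> infinite {q\<in>T'. cls p q = cls p q0}"
    unfolding q0_def by (rule someI_ex[OF ex])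
  have st: "step T = {q\<in>T'. cls p q = cls p q0}"
    unfolding step_def p_def[symmetric] T'_def[symmetric] q0_def[symmetric] Let_def by simp
  show ?thesis unfolding p_def[symmetric] st using q0 by (auto simp: T'_def)
qed

primrec pool :: "'a list set \<Rightarrow> nat \<Rightarrow> 'a list set" where
  "pool S 0 = S"
| "pool S (Suc n) = step (pool S n)"

definition PP :: "'a list set \<Rightarrow> nat \<Rightarrow> 'a list" where
  "PP S n = (SOME p. p \<in> pool S n)"

lemma pool_inf: "infinite S \<Longrightarrow> infinite (pool S n)"
  by (induction n) (simp_all add: conjunct1[OF step_props])

lemma pool_Suc: assumes "infinite S" shows "pool S (Suc n) \<subseteq> pool S n - {PP S n}"
  using conjunct1[OF conjunct2[OF step_props[OF pool_inf[OF assms, of n]]]] by (simp add: PP_def)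

lemma pool_mono: assumes "infinite S" and "m \<le> n" shows "pool S n \<subseteq> pool S m"
  using assms(2)
proof (induction n rule: dec_induct)
  case (step n)
  then show ?case using pool_Suc[OF assms(1), of n] by blast
qed simp

lemma PP_in: "infinite S \<Longrightarrow> PP S n \<in> pool S n"
  unfolding PP_def by (rule someI_ex) (metis finite.emptyI ex_in_conv pool_inf)

lemma PP_in_le: "infinite S \<Longrightarrow> m \<le> n \<Longrightarrow> PP S n \<in> pool S m"
  using PP_in pool_mono by blast

lemma PP_S: "infinite S \<Longrightarrow> PP S n \<in> S"
  using PP_in_le[of S 0 n] by simp

lemma PP_neq: "infinite S \<Longrightarrow> m < n \<Longrightarrow> PP S n \<noteq> PP S m"
  using PP_in_le[of S "Suc m" n] pool_Suc[of S m] by auto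

lemma PP_agree: "infinite S \<Longrightarrow> j < n \<Longrightarrow> j < n' \<Longrightarrow> cls (PP S j) (PP S n) = cls (PP S j) (PP S n')"
proof -
  assume S: "infinite S" and a: "j < n" "j < n'"
  have i1: "PP S n \<in> step (pool S j)" using PP_in_le[OF S, of "Suc j" n] a by simp
  have i2: "PP S n' \<in> step (pool S j)" using PP_in_le[OF S, of "Suc j" n'] a by simp
  have H: "\<forall>q\<in>step (pool S j). \<forall>q'\<in>step (pool S j). cls (PP S j) q = cls (PP S j) q'"
    using step_props[OF pool_inf[OF S, of j]] unfolding PP_def by (elim conjE)
  show ?thesis using bspec[OF bspec[OF H i1] i2] .
qed

lemma PP_A: "infinite S \<Longrightarrow> j < n \<Longrightarrow> j < n' \<Longrightarrow> v \<in> set (PP S j) \<Longrightarrow>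
   v \<in> set (PP S n) \<longleftrightarrow> v \<in> set (PP S n')"
proof -
  assume a: "infinite S" "j < n" "j < n'" "v \<in> set (PP S j)"
  have E: "cls (PP S j) (PP S n) = cls (PP S j) (PP S n')" by (rule PP_agree[OF a(1-3)])
  have "fst (cls (PP S j) (PP S n)) = fst (cls (PP S j) (PP S n'))" using E by (rule arg_cong)
  hence "set (PP S n) \<inter> set (PP S j) = set (PP S n') \<inter> set (PP S j)"
    by (simp only: cls_def fst_conv)
  thus ?thesis using a(4) by blast
qed

lemma PP_C: "infinite S \<Longrightarrow> j < n \<Longrightarrow> j < n' \<Longrightarrow> u \<in> set (PP S j) \<Longrightarrow> w \<in> set (PP S j) \<Longrightarrow>
   path_le (PP S n) u w \<longleftrightarrow> path_le (PP S n') u w"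
proof -
  assume a: "infinite S" "j < n" "j < n'" "u \<in> set (PP S j)" "w \<in> set (PP S j)"
  have E: "cls (PP S j) (PP S n) = cls (PP S j) (PP S n')" by (rule PP_agree[OF a(1-3)])
  have "snd (cls (PP S j) (PP S n)) = snd (cls (PP S j) (PP S n'))" using E by (rule arg_cong)
  hence H: "{(u,w). u \<in> set (PP S j) \<and> w \<in> set (PP S j) \<and> path_le (PP S n) u w} =
        {(u,w). u \<in> set (PP S j) \<and> w \<in> set (PP S j) \<and> path_le (PP S n') u w}"
    by (simp only: cls_def snd_conv)
  have "(u,w) \<in> {(u,w). u \<in> set (PP S j) \<and> w \<in> set (PP S j) \<and> path_le (PP S n) u w} \<longleftrightarrow>
         (u,w) \<in> {(u,w). u \<in> set (PP S j) \<and> w \<in> set (PP S j) \<and> path_le (PP S n') u w}"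
    by (simp only: H)
  thus ?thesis using a(4,5) by simp
qed

lemma pe_ne:
  assumes p: "is_path V E x y p" and xy: "x \<noteq> y" shows "path_edges p \<noteq> {}"
proof -
  have ne: "p \<noteq> []" and h: "hd p = x" and l: "last p = y" using p unfolding is_path_def by auto
  have "length p \<noteq> 1"
  proof
    assume "length p = 1"
    then obtain a where "p = [a]" by (cases p) auto
    thus False using h l xy by simp
  qed
  hence "Suc 0 < length p" using ne by (cases p) auto
  hence "{p ! 0, p ! Suc 0} \<in> path_edges p" unfolding path_edges_def by blast
  thus ?thesis by blast
qed

theorem theorem5p4:
  fixes V :: "'a set" and E :: "'a \<Rightarrow> 'a \<Rightarrow> bool" and x y :: 'a
  assumes "simple_graph V E" and "x \<in> V" and "y \<in> V" and "x \<noteq> y"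
  shows "(\<exists>L R P. grain_line V E x y L R P) \<longleftrightarrow>
         (\<exists>S. infinite S \<and> (\<forall>p\<in>S. is_path V E x y p) \<and>
              (\<forall>p\<in>S. \<forall>q\<in>S. p \<noteq> q \<longrightarrow> edge_disjoint p q))"
proof
  assume "\<exists>L R P. grain_line V E x y L R P"
  then obtain L R P where g: "grain_line V E x y L R P" by blast
  have paths: "\<forall>n. is_path V E x y (P n)"
    apply (insert g) apply (unfold grain_line_def) apply (elim conjE) apply assumption done
  have dis: "\<forall>n m. n \<noteq> m \<longrightarrow> edge_disjoint (P n) (P m)"
    apply (insert g) apply (unfold grain_line_def) apply (elim conjE) apply assumption done
  have inj: "inj P"
  proof (rule injI)
    fix n m assume eq: "P n = P m"
    show "n = m"
    proof (rule ccontr)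
      assume "n \<noteq> m"
      hence "edge_disjoint (P n) (P m)" using dis by blast
      hence "path_edges (P n) = {}" using eq by (simp add: edge_disjoint_def)
      thus False using pe_ne[OF paths[rule_format, of n] assms(4)] by simp
    qed
  qed
  have "infinite (range P)"
  proof
    assume "finite (range P)"
    hence "finite (UNIV :: nat set)" using finite_imageD[OF _ inj] by blast
    thus False by simp
  qed
  moreover have "\<forall>p\<in>range P. is_path V E x y p"
  proof
    fix p assume "p \<in> range P"
    then obtain n where "p = P n" by (rule rangeE)
    thus "is_path V E x y p" using paths by simp
  qed
  moreover have "\<forall>p\<in>range P. \<forall>q\<in>range P. p \<noteq> q \<longrightarrow> edge_disjoint p q"
  proof (intro ballI impI)
    fix p q assume "p \<in> range P" "q \<in> range P" "p \<noteq> q"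
    then obtain n m where nm: "p = P n" "q = P m" by (meson rangeE)
    hence "n \<noteq> m" using \<open>p \<noteq> q\<close> by auto
    thus "edge_disjoint p q" using dis nm by simp
  qed
  ultimately show "\<exists>S. infinite S \<and> (\<forall>p\<in>S. is_path V E x y p) \<and>
              (\<forall>p\<in>S. \<forall>q\<in>S. p \<noteq> q \<longrightarrow> edge_disjoint p q)"
    by (intro exI[of _ "range P"] conjI)
next
  assume "\<exists>S. infinite S \<and> (\<forall>p\<in>S. is_path V E x y p) \<and>
              (\<forall>p\<in>S. \<forall>q\<in>S. p \<noteq> q \<longrightarrow> edge_disjoint p q)"
  then obtain S where S: "infinite S" and Sp: "\<forall>p\<in>S. is_path V E x y p"
    and Sd: "\<forall>p\<in>S. \<forall>q\<in>S. p \<noteq> q \<longrightarrow> edge_disjoint p q" by blast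
  define P where "P = PP S"
  have PS: "P n \<in> S" for n unfolding P_def by (rule PP_S[OF S])
  have Pp: "is_path V E x y (P n)" for n using Sp PS by blast
  have Pd: "distinct (P n)" for n using Pp[of n] unfolding is_path_def by blast
  have Pne: "P n \<noteq> []" for n using Pp[of n] unfolding is_path_def by blast
  have Phd: "hd (P n) = x" for n using Pp[of n] unfolding is_path_def by blast
  have Plast: "last (P n) = y" for n using Pp[of n] unfolding is_path_def by blast
  have Pset: "set (P n) \<subseteq> V" for n using Pp[of n] unfolding is_path_def by blast
  have xin: "x \<in> set (P n)" for n using hd_in_set[OF Pne[of n]] Phd[of n] by simp
  have yin: "y \<in> set (P n)" for n using last_in_set[OF Pne[of n]] Plast[of n] by simp
  have Pinj: "P n \<noteq> P m" if "n \<noteq> m" for n m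
  proof (cases "n < m")
    case True thus ?thesis unfolding P_def using PP_neq[OF S True] by simp
  next
    case False hence "m < n" using that by simp
    thus ?thesis unfolding P_def using PP_neq[OF S] by simp
  qed
  have A': "v \<in> set (P n) \<longleftrightarrow> v \<in> set (P n')"
    if "j < n" "j < n'" "v \<in> set (P j)" for j n n' v
    using PP_A[OF S that[unfolded P_def]] unfolding P_def .
  have C': "path_le (P n) u w \<longleftrightarrow> path_le (P n') u w"
    if "j < n" "j < n'" "u \<in> set (P j)" "w \<in> set (P j)" for j n n' u w
    using PP_C[OF S that[unfolded P_def]] unfolding P_def .
  define L where "L = {v. \<exists>m. {n. v \<in> set (P n)} = {m..}}"
  have Liff: "v \<in> L \<longleftrightarrow> (\<exists>m. {n. v \<in> set (P n)} = {m..})" for v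
    unfolding L_def by (rule mem_Collect_eq)
  have LI: "v \<in> L" if "{n. v \<in> set (P n)} = {m..}" for v m
    unfolding Liff by (rule exI[of _ m]) (rule that)
  have Lmem: "v \<in> set (P n)" if "v \<in> L" "v \<in> set (P k)" "k \<le> n" for v k n
  proof -
    from that(1)[unfolded Liff] obtain m where m: "{n. v \<in> set (P n)} = {m..}" ..
    have "k \<in> {n. v \<in> set (P n)}" using that(2) by simp
    hence "k \<in> {m..}" by (simp only: m)
    hence "n \<in> {m..}" using that(3) by simp
    hence "n \<in> {n. v \<in> set (P n)}" by (simp only: m)
    thus ?thesis by simp
  qed
  have Lsome: "\<exists>k. v \<in> set (P k)" if "v \<in> L" for v
  proof -
    from that(1)[unfolded Liff] obtain m where m: "{n. v \<in> set (P n)} = {m..}" ..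
    have "m \<in> {m..}" by simp
    hence "m \<in> {n. v \<in> set (P n)}" by (simp only: m)
    thus ?thesis by blast
  qed
  have Lpair: "\<exists>j. u \<in> set (P j) \<and> w \<in> set (P j)" if tt: "u \<in> L" "w \<in> L" for u w
  proof -
    obtain a where a: "u \<in> set (P a)" using Lsome tt(1) by blast
    obtain b where b: "w \<in> set (P b)" using Lsome tt(2) by blast
    have "u \<in> set (P (max a b))" using Lmem[OF tt(1) a] by simp
    moreover have "w \<in> set (P (max a b))" using Lmem[OF tt(2) b] by simp
    ultimately show ?thesis by blast
  qed
  have Ltriple: "\<exists>j. u \<in> set (P j) \<and> v \<in> set (P j) \<and> w \<in> set (P j)"
    if tt: "u \<in> L" "v \<in> L" "w \<in> L" for u v w
  proof -
    obtain a where a: "u \<in> set (P a)" "v \<in> set (P a)" using Lpair tt(1,2) by blast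
    obtain b where b: "w \<in> set (P b)" using Lsome tt(3) by blast
    have "u \<in> set (P (max a b))" using Lmem[OF tt(1) a(1)] by simp
    moreover have "v \<in> set (P (max a b))" using Lmem[OF tt(2) a(2)] by simp
    moreover have "w \<in> set (P (max a b))" using Lmem[OF tt(3) b] by simp
    ultimately show ?thesis by blast
  qed
  have xL: "x \<in> L"
  proof -
    have "{n. x \<in> set (P n)} = {0..}" using xin by auto
    thus ?thesis by (rule LI)
  qed
  have yL: "y \<in> L"
  proof -
    have "{n. y \<in> set (P n)} = {0..}" using yin by auto
    thus ?thesis by (rule LI)
  qed
  have GL2: False if a: "v \<in> set (P n)" "v \<notin> L" "m \<noteq> n" "v \<in> set (P m)" for n v m
  proof -
    define j where "j = (LEAST k. v \<in> set (P k))"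
    have vj: "v \<in> set (P j)" unfolding j_def using a(1) by (rule LeastI)
    have jle: "j \<le> k" if "v \<in> set (P k)" for k unfolding j_def using that by (rule Least_le)
    obtain i where i: "j < i" "v \<in> set (P i)"
    proof (cases "j < n")
      case True thus ?thesis using that a(1) by blast
    next
      case False
      hence "n = j" using jle[OF a(1)] by simp
      hence "j < m" using jle[OF a(4)] a(3) by simp
      thus ?thesis using that a(4) by blast
    qed
    have all: "v \<in> set (P k)" if "j < k" for k using A'[OF i(1) that vj] i(2) by simp
    have "{k. v \<in> set (P k)} = {j..}"
    proof
      show "{k. v \<in> set (P k)} \<subseteq> {j..}" using jle by auto
      show "{j..} \<subseteq> {k. v \<in> set (P k)}"
      proof
        fix k assume "k \<in> {j..}"
        hence "k = j \<or> j < k" by auto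
        thus "k \<in> {k. v \<in> set (P k)}" using vj all by auto
      qed
    qed
    hence "v \<in> L" by (rule LI)
    thus False using a(2) by simp
  qed
  define R where "R = {(u,w). u \<in> L \<and> w \<in> L \<and>
      (\<exists>j. u \<in> set (P j) \<and> w \<in> set (P j) \<and> path_le (P (Suc j)) u w)}"
  have Rchar: "(u,w) \<in> R \<longleftrightarrow> path_le (P n) u w"
    if a: "u \<in> L" "w \<in> L" "u \<in> set (P j)" "w \<in> set (P j)" "j < n" for u w j n
  proof
    assume "(u,w) \<in> R"
    then obtain j' where j': "u \<in> set (P j')" "w \<in> set (P j')" "path_le (P (Suc j')) u w"
      unfolding R_def by blast
    define N where "N = Suc (max j j')"
    have "path_le (P N) u w" using C'[of j' "Suc j'" N u w] j' unfolding N_def by simp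
    thus "path_le (P n) u w" using C'[of j n N u w] a unfolding N_def by simp
  next
    assume "path_le (P n) u w"
    hence "path_le (P (Suc j)) u w" using C'[of j n "Suc j" u w] a by simp
    thus "(u,w) \<in> R" unfolding R_def using a by blast
  qed
  have RL: "R \<subseteq> L \<times> L" unfolding R_def by blast
  have Rrefl: "refl_on L R" unfolding refl_on_def
  proof
    fix u assume u: "u \<in> L"
    obtain k where k: "u \<in> set (P k)" using Lsome u by blast
    have "u \<in> set (P (Suc k))" using Lmem[OF u k] by simp
    hence "path_le (P (Suc k)) u u" by (rule pl_refl)
    thus "(u,u) \<in> R" using Rchar[OF u u k k, of "Suc k"] by simp
  qed
  have Rtrans: "trans R" unfolding trans_def
  proof (intro allI impI)
    fix u v w assume uv: "(u,v) \<in> R" and vw: "(v,w) \<in> R"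
    have L3: "u \<in> L" "v \<in> L" "w \<in> L" using uv vw RL by blast+
    obtain j where j: "u \<in> set (P j)" "v \<in> set (P j)" "w \<in> set (P j)" using Ltriple[OF L3] by blast
    have "path_le (P (Suc j)) u v" using Rchar[OF L3(1,2) j(1,2), of "Suc j"] uv by simp
    moreover have "path_le (P (Suc j)) v w" using Rchar[OF L3(2,3) j(2,3), of "Suc j"] vw by simp
    ultimately have "path_le (P (Suc j)) u w" using pl_trans[OF Pd] by blast
    thus "(u,w) \<in> R" using Rchar[OF L3(1,3) j(1,3), of "Suc j"] by simp
  qed
  have Rantisym: "antisym R" unfolding antisym_def
  proof (intro allI impI)
    fix u w assume uw: "(u,w) \<in> R" and wu: "(w,u) \<in> R"
    have L2: "u \<in> L" "w \<in> L" using uw RL by blast+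
    obtain j where j: "u \<in> set (P j)" "w \<in> set (P j)" using Lpair[OF L2] by blast
    have "path_le (P (Suc j)) u w" using Rchar[OF L2 j, of "Suc j"] uw by simp
    moreover have "path_le (P (Suc j)) w u" using Rchar[OF L2(2,1) j(2,1), of "Suc j"] wu by simp
    ultimately show "u = w" using pl_antisym[OF Pd] by blast
  qed
  have Rtotal: "total_on L R" unfolding total_on_def
  proof (intro ballI impI)
    fix u w assume L2: "u \<in> L" "w \<in> L"
    obtain j where j: "u \<in> set (P j)" "w \<in> set (P j)" using Lpair[OF L2] by blast
    have "u \<in> set (P (Suc j))" using Lmem[OF L2(1) j(1)] by simp
    moreover have "w \<in> set (P (Suc j))" using Lmem[OF L2(2) j(2)] by simp
    ultimately have "path_le (P (Suc j)) u w \<or> path_le (P (Suc j)) w u" by (rule pl_total)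
    thus "(u,w) \<in> R \<or> (w,u) \<in> R"
      using Rchar[OF L2 j, of "Suc j"] Rchar[OF L2(2,1) j(2,1), of "Suc j"] by simp
  qed
  have f3: "linear_order_on L R"
    unfolding linear_order_on_def partial_order_on_def preorder_on_def
    by (intro conjI RL Rrefl Rtrans Rantisym Rtotal)
  have f1: "L \<subseteq> V" using Lsome Pset by blast
  have f2: "countable L"
  proof (rule countable_subset)
    show "L \<subseteq> (\<Union>n. set (P n))" using Lsome by blast
    show "countable (\<Union>n. set (P n))" by (rule countable_UN) (simp_all add: countable_finite)
  qed
  have f5: "\<forall>v\<in>L. (x, v) \<in> R"
  proof
    fix v assume v: "v \<in> L"
    obtain j where j: "x \<in> set (P j)" "v \<in> set (P j)" using Lpair[OF xL v] by blast
    have "v \<in> set (P (Suc j))" using Lmem[OF v j(2)] by simp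
    hence "path_le (P (Suc j)) (hd (P (Suc j))) v" by (rule pl_hd[OF Pne])
    hence "path_le (P (Suc j)) x v" by (simp only: Phd)
    thus "(x,v) \<in> R" using Rchar[OF xL v j, of "Suc j"] by simp
  qed
  have f7: "\<forall>v\<in>L. (v, y) \<in> R"
  proof
    fix v assume v: "v \<in> L"
    obtain j where j: "v \<in> set (P j)" "y \<in> set (P j)" using Lpair[OF v yL] by blast
    have "v \<in> set (P (Suc j))" using Lmem[OF v j(1)] by simp
    hence "path_le (P (Suc j)) v (last (P (Suc j)))" by (rule pl_last[OF Pne])
    hence "path_le (P (Suc j)) v y" by (simp only: Plast)
    thus "(v,y) \<in> R" using Rchar[OF v yL j, of "Suc j"] by simp
  qed
  have f8: "\<forall>n. is_path V E x y (P n)" using Pp by blast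
  have f9: "\<forall>n m. n \<noteq> m \<longrightarrow> edge_disjoint (P n) (P m)" using Sd PS Pinj by blast
  have f10: "L = {v. \<exists>m. {n. v \<in> set (P n)} = {m..}}" by (rule L_def)
  have f11: "\<forall>n v. v \<in> set (P n) \<and> v \<notin> L \<longrightarrow> (\<forall>m. m \<noteq> n \<longrightarrow> v \<notin> set (P m))"
    using GL2 by blast
  have f12: "\<forall>n. \<forall>u \<in> L \<inter> (\<Union>k<n. set (P k)). \<forall>w \<in> L \<inter> (\<Union>k<n. set (P k)).
         path_le (P n) u w \<longleftrightarrow> (u, w) \<in> R"
  proof (intro allI ballI)
    fix n u w assume u: "u \<in> L \<inter> (\<Union>k<n. set (P k))" and w: "w \<in> L \<inter> (\<Union>k<n. set (P k))"
    obtain a where a: "a < n" "u \<in> set (P a)" using u by blast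
    obtain b where b: "b < n" "w \<in> set (P b)" using w by blast
    have uL: "u \<in> L" and wL: "w \<in> L" using u w by blast+
    have m1: "u \<in> set (P (max a b))" using Lmem[OF uL a(2)] by simp
    have m2: "w \<in> set (P (max a b))" using Lmem[OF wL b(2)] by simp
    have m3: "max a b < n" using a b by simp
    show "path_le (P n) u w \<longleftrightarrow> (u, w) \<in> R" using Rchar[OF uL wL m1 m2 m3] by simp
  qed
  have "grain_line V E x y L R P"
    unfolding grain_line_def
    by (intro conjI; (rule f1 f2 f3 xL f5 yL f7 f8 f9 f10 f11 f12))
  thus "\<exists>L R P. grain_line V E x y L R P" by blast
qed

end
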